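(* Consider the planar system \[ \frac{dx}{dt}= x\Big(1-\frac{x}{\gamma}\Big)-\frac{xy}{(1+\alpha\xi)(\omega x^2+1)+x},\qquad \frac{dy}{dt}= \frac{\delta\big(x+\xi(\omega x^2+1)\big)y}{(1+\alpha\xi)(\omega x^2+1)+x}-my-\epsilon y^2, \] with positive parameters $\gamma,\alpha,\xi,\omega,\delta,m,\epsilon$ satisfying $\delta>m$. The equilibrium $E_2=\Big(0,\frac{\delta\xi-m(1+\alpha\xi)}{\epsilon(1+\alpha\xi)}\Big)$ lies in the positive $xy$-quadrant and is a stable node if $\delta\xi-m(1+\alpha\xi)>0$ and $\delta\xi-m(1+\alpha\xi)>\epsilon(1+\alpha\xi)^2$; it lies in the positive $xy$-quadrant and is a saddle if $\delta\xi-m(1+\alpha\xi)>0$ and $\delta\xi-m(1+\alpha\xi)<\epsilon(1+\alpha\xi)^2$.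
   Context: $x$ and $y$ are prey (pest) and predator densities; $\alpha$ and $\xi$ are the quality and quantity of additional food for predators, $\epsilon$ is the predator intra-specific competition coefficient. Stability type refers to the linearization (Jacobian) at the equilibrium. *)

theory Defs
  imports "HOL-Analysis.Analysis"
begin

definition denom :: "real \<Rightarrow> real \<Rightarrow> real \<Rightarrow> real \<Rightarrow> real" where
  "denom \<alpha> \<xi> \<omega> x = (1 + \<alpha> * \<xi>) * (\<omega> * x^2 + 1) + x"

definition field ::
  "real \<Rightarrow> real \<Rightarrow> real \<Rightarrow> real \<Rightarrow> real \<Rightarrow> real \<Rightarrow> real \<Rightarrow> real \<times> real \<Rightarrow> real \<times> real" where
  "field \<gamma> \<alpha> \<xi> \<omega> \<delta> m \<epsilon> p = (case p of (x, y) \<Rightarrow>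
     ( x * (1 - x / \<gamma>) - x * y / denom \<alpha> \<xi> \<omega> x,
       \<delta> * (x + \<xi> * (\<omega> * x^2 + 1)) * y / denom \<alpha> \<xi> \<omega> x - m * y - \<epsilon> * y^2 ))"

definition jacobian_at ::
  "(real \<times> real \<Rightarrow> real \<times> real) \<Rightarrow> real \<times> real \<Rightarrow> real \<Rightarrow> real \<Rightarrow> real \<Rightarrow> real \<Rightarrow> bool" where
  "jacobian_at F p a b c d \<longleftrightarrow>
     (F has_derivative (\<lambda>(h1, h2). (a * h1 + b * h2, c * h1 + d * h2))) (at p)"

definition eigenvalues2 :: "real \<Rightarrow> real \<Rightarrow> real \<Rightarrow> real \<Rightarrow> complex set" where
  "eigenvalues2 a b c d =
     {z. (complex_of_real a - z) * (complex_of_real d - z) - complex_of_real b * complex_of_real c = 0}"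

definition stable_node2 :: "real \<Rightarrow> real \<Rightarrow> real \<Rightarrow> real \<Rightarrow> bool" where
  "stable_node2 a b c d \<longleftrightarrow> (\<forall>z\<in>eigenvalues2 a b c d. Im z = 0 \<and> Re z < 0)"

definition saddle2 :: "real \<Rightarrow> real \<Rightarrow> real \<Rightarrow> real \<Rightarrow> bool" where
  "saddle2 a b c d \<longleftrightarrow> (\<forall>z\<in>eigenvalues2 a b c d. Im z = 0)
     \<and> (\<exists>z\<in>eigenvalues2 a b c d. Re z > 0) \<and> (\<exists>z\<in>eigenvalues2 a b c d. Re z < 0)"

end

theory Submission imports Defs begin
lemma field_eq: "field g al xi om de m ep = (\<lambda>p. (fst p * (1 - fst p / g) - fst p * snd p / denom al xi om (fst p),
   de * (fst p + xi * (om * (fst p)^2 + 1)) * snd p / denom al xi om (fst p) - m * snd p - ep * (snd p)^2))"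
  by (auto simp: field_def fun_eq_iff split: prod.split)

lemma jac:
  assumes "g > 0" "al > 0" "xi > 0" "om > 0"
  shows "jacobian_at (field g al xi om de m ep) (0, y)
     (1 - y / (1 + al*xi)) 0 (de * y * (1 + al*xi - xi) / (1 + al*xi)^2)
     (de * xi / (1 + al*xi) - m - 2 * ep * y)"
proof -
  have A: "1 + al*xi > 0" using assms by (simp add: add_pos_pos)
  have dn: "\<And>x. (denom al xi om has_real_derivative (1 + al*xi) * (om * 2 * x) + 1) (at x)"
    unfolding denom_def by (auto intro!: derivative_eq_intros)
  show ?thesis
    unfolding jacobian_at_def field_eq
    apply (rule has_derivative_eq_rhs)
     apply (unfold denom_def)
     apply (rule derivative_intros | simp add: A[THEN less_imp_neq, symmetric] assms(1)[THEN less_imp_neq, symmetric])+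
    apply (auto simp: fun_eq_iff)
    subgoal
    proof -
      define K where "K = 1 + al*xi"
      have K: "K \<noteq> 0" using A K_def by simp
      have "al * xi = K - 1" using K_def by simp
      then show ?thesis unfolding K_def[symmetric] using K
        by (simp add: field_simps power2_eq_square inverse_eq_divide)
    qed
    subgoal
    proof -
      define K where "K = 1 + al*xi"
      have K: "K \<noteq> 0" using A K_def by simp
      have "al * xi = K - 1" using K_def by simp
      then show ?thesis unfolding K_def[symmetric] using K
        by (simp add: field_simps power2_eq_square inverse_eq_divide)
    qed
    done
qed

lemma eig: "eigenvalues2 a 0 c d = {complex_of_real a, complex_of_real d}"
  unfolding eigenvalues2_def by auto

theorem mainTheorem4:
  fixes \<gamma> \<alpha> \<xi> \<omega> \<delta> m \<epsilon> :: real
  assumes pos: "\<gamma> > 0" "\<alpha> > 0" "\<xi> > 0" "\<omega> > 0" "\<delta> > 0" "m > 0" "\<epsilon> > 0"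
    and dm: "\<delta> > m"
  defines "E2 \<equiv> (0::real, (\<delta> * \<xi> - m * (1 + \<alpha> * \<xi>)) / (\<epsilon> * (1 + \<alpha> * \<xi>)))"
  shows
   "(\<delta> * \<xi> - m * (1 + \<alpha> * \<xi>) > 0 \<and> \<delta> * \<xi> - m * (1 + \<alpha> * \<xi>) > \<epsilon> * (1 + \<alpha> * \<xi>)^2 \<longrightarrow>
       field \<gamma> \<alpha> \<xi> \<omega> \<delta> m \<epsilon> E2 = (0, 0) \<and> fst E2 \<ge> 0 \<and> snd E2 > 0 \<and>
       (\<exists>a b c d. jacobian_at (field \<gamma> \<alpha> \<xi> \<omega> \<delta> m \<epsilon>) E2 a b c d \<and> stable_node2 a b c d))
  \<and> (\<delta> * \<xi> - m * (1 + \<alpha> * \<xi>) > 0 \<and> \<delta> * \<xi> - m * (1 + \<alpha> * \<xi>) < \<epsilon> * (1 + \<alpha> * \<xi>)^2 \<longrightarrow>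
       field \<gamma> \<alpha> \<xi> \<omega> \<delta> m \<epsilon> E2 = (0, 0) \<and> fst E2 \<ge> 0 \<and> snd E2 > 0 \<and>
       (\<exists>a b c d. jacobian_at (field \<gamma> \<alpha> \<xi> \<omega> \<delta> m \<epsilon>) E2 a b c d \<and> saddle2 a b c d))"
  proof -
  define A where "A = 1 + \<alpha> * \<xi>"
  define D where "D = \<delta> * \<xi> - m * A"
  define y where "y = D / (\<epsilon> * A)"
  have A: "A > 0" using pos unfolding A_def by (simp add: add_pos_pos)
  have E: "E2 = (0, y)" unfolding E2_def y_def D_def A_def by simp
  have dn: "d = \<delta> * \<xi> / A - m - 2 * \<epsilon> * y \<Longrightarrow> d = - D / A" for d
  proof -
    assume h: "d = \<delta> * \<xi> / A - m - 2 * \<epsilon> * y"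
    have ey: "\<epsilon> * y * A = D" unfolding y_def using A pos by simp
    have "d * A = \<delta> * \<xi> - m * A - 2 * (\<epsilon> * y * A)" unfolding h using A
      by (simp add: field_simps)
    then have "d * A = - D" unfolding ey D_def by simp
    then show ?thesis using A by (simp add: field_simps)
  qed
  have J: "jacobian_at (field \<gamma> \<alpha> \<xi> \<omega> \<delta> m \<epsilon>) E2 (1 - y / A) 0 (\<delta> * y * (A - \<xi>) / A^2) (- D / A)"
    using jac[OF pos(1,2,3,4), of \<delta> m \<epsilon> y] dn[OF refl] unfolding E A_def by simp
  have F: "field \<gamma> \<alpha> \<xi> \<omega> \<delta> m \<epsilon> E2 = (0, 0)"
    unfolding E field_def denom_def A_def[symmetric] using A pos
    by (simp add: y_def D_def field_simps power2_eq_square)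
  have ya: "y / A = D / (\<epsilon> * A^2)" unfolding y_def by (simp add: power2_eq_square)
  show ?thesis
  proof (intro conjI impI)
    assume h: "\<delta> * \<xi> - m * (1 + \<alpha> * \<xi>) > 0 \<and> \<delta> * \<xi> - m * (1 + \<alpha> * \<xi>) > \<epsilon> * (1 + \<alpha> * \<xi>)^2"
    hence D0: "D > 0" and D1: "D > \<epsilon> * A^2" unfolding D_def A_def by auto
    show "field \<gamma> \<alpha> \<xi> \<omega> \<delta> m \<epsilon> E2 = (0, 0)" by (rule F)
    show "fst E2 \<ge> 0" unfolding E by simp
    show "snd E2 > 0" unfolding E y_def using D0 A pos by simp
    have "y / A > 1" unfolding ya using D1 A pos by (simp add: field_simps)
    moreover have "D / A > 0" using D0 A by simp
    ultimately have "stable_node2 (1 - y / A) 0 (\<delta> * y * (A - \<xi>) / A^2) (- D / A)"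
      unfolding stable_node2_def eig by auto
    with J show "\<exists>a b c d. jacobian_at (field \<gamma> \<alpha> \<xi> \<omega> \<delta> m \<epsilon>) E2 a b c d \<and> stable_node2 a b c d" by blast
  next
    assume h: "\<delta> * \<xi> - m * (1 + \<alpha> * \<xi>) > 0 \<and> \<delta> * \<xi> - m * (1 + \<alpha> * \<xi>) < \<epsilon> * (1 + \<alpha> * \<xi>)^2"
    hence D0: "D > 0" and D1: "D < \<epsilon> * A^2" unfolding D_def A_def by auto
    show "field \<gamma> \<alpha> \<xi> \<omega> \<delta> m \<epsilon> E2 = (0, 0)" by (rule F)
    show "fst E2 \<ge> 0" unfolding E by simp
    show "snd E2 > 0" unfolding E y_def using D0 A pos by simp
    have "y / A < 1" unfolding ya using D1 A pos by (simp add: field_simps)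
    moreover have "D / A > 0" using D0 A by simp
    ultimately have "saddle2 (1 - y / A) 0 (\<delta> * y * (A - \<xi>) / A^2) (- D / A)"
      unfolding saddle2_def eig by auto
    with J show "\<exists>a b c d. jacobian_at (field \<gamma> \<alpha> \<xi> \<omega> \<delta> m \<epsilon>) E2 a b c d \<and> saddle2 a b c d" by blast
  qed
qed

end
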